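(* Let $\mu$ be a Krull valuation on $\overline{\mathbb{K}}[x]$, let $f\in\overline{\mathbb{K}}[x]$ be non-constant and $a$ an optimizing root of $f$. If $g\in\overline{\mathbb{K}}[x]$ is non-constant with $\delta(g)<\delta(f)$, then $g(a)\neq 0$, $$\mu_{x-a}(g)=\mu(g)=\mu(g(a)),$$ and $\mu_{x-a}(g/g(a))=0$ with residue $\left(g/g(a)\right)\mu_{x-a}=1$ in the residue field of $\mu_{x-a}$ on $\overline{\mathbb{K}}(x)$. Moreover, if $\mathbb{K}\subseteq\overline{\mathbb{K}}$ is a subfield with $\overline{\mathbb{K}}$ its algebraic closure, $Q\in\mathbb{K}[x]$ is a key polynomial for the restriction $\nu=\mu|_{\mathbb{K}[x]}$ and $a$ is an optimizing root of $Q$, then $\mu_{x-a}(Q)=\mu(Q)$.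
   Context: For non-constant $f\in\overline{\mathbb{K}}[x]$, $\delta(f)=\max\{\mu(x-c):f(c)=0\}$, and a root $c$ with $\mu(x-c)=\delta(f)$ is an optimizing root. $\mu_{x-a}$ is the truncation of $\mu$ at $x-a$: $\mu_{x-a}(\sum_i c_i(x-a)^i)=\min_i\{\mu(c_i)+i\mu(x-a)\}$, a valuation on $\overline{\mathbb{K}}[x]$ extended to $\overline{\mathbb{K}}(x)$. Key polynomials: for nonzero $f\in\mathbb{K}[x]$, with Hasse derivatives $\partial_bf=\sum_{i\ge b}\binom{i}{b}a_ix^{i-b}$ for $f=\sum a_ix^i$, $\epsilon(f)=\max_{1\le b\le\deg f}(\nu(f)-\nu(\partial_bf))/b$ if $\deg f>0$ and $\epsilon(f)=-\infty$ if $f$ is constant; a monic $Q$ is a key polynomial for $\nu$ if $\epsilon(f)\ge\epsilon(Q)$ implies $\deg f\ge\deg Q$ for all $f$. *)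

theory Defs
  imports "HOL-Computational_Algebra.Polynomial"
begin

text \<open>Krull valuation on the polynomial ring k[x] (k = algebraically closed field),
  with values in an ordered abelian group; the axioms are imposed on nonzero
  polynomials (mu 0 = infinity is not represented: trivial support).\<close>
definition krull_valuation :: "('k::field poly \<Rightarrow> 'g::linordered_ab_group_add) \<Rightarrow> bool" where
  "krull_valuation \<mu> \<longleftrightarrow>
     (\<forall>f g. f \<noteq> 0 \<longrightarrow> g \<noteq> 0 \<longrightarrow> \<mu> (f * g) = \<mu> f + \<mu> g) \<and>
     (\<forall>f g. f \<noteq> 0 \<longrightarrow> g \<noteq> 0 \<longrightarrow> f + g \<noteq> 0 \<longrightarrow> min (\<mu> f) (\<mu> g) \<le> \<mu> (f + g))"

definition nsmul :: "nat \<Rightarrow> 'g::ab_group_add \<Rightarrow> 'g" where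
  "nsmul n \<gamma> = (\<Sum>j<n. \<gamma>)"

definition delta :: "('k::field poly \<Rightarrow> 'g::linorder) \<Rightarrow> 'k poly \<Rightarrow> 'g" where
  "delta \<mu> f = Max ((\<lambda>c. \<mu> [:-c, 1:]) ` {c. poly f c = 0})"

definition optimizing_root :: "('k::field poly \<Rightarrow> 'g::linorder) \<Rightarrow> 'k poly \<Rightarrow> 'k \<Rightarrow> bool" where
  "optimizing_root \<mu> f a \<longleftrightarrow> poly f a = 0 \<and> \<mu> [:-a, 1:] = delta \<mu> f"

text \<open>Truncation of mu at x - a: writing g = sum_i c_i (x-a)^i (so c_i are the
  coefficients of g(x+a)), mu_{x-a}(g) = min_i (mu(c_i) + i mu(x-a)) over c_i nonzero.\<close>
definition trunc_val :: "('k::field poly \<Rightarrow> 'g::linordered_ab_group_add) \<Rightarrow> 'k \<Rightarrow> 'k poly \<Rightarrow> 'g" where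
  "trunc_val \<mu> a g = Min {\<mu> [:coeff (pcompose g [:a, 1:]) i:] + nsmul i (\<mu> [:-a, 1:]) | i.
                          i \<le> degree g \<and> coeff (pcompose g [:a, 1:]) i \<noteq> 0}"

definition hasse :: "nat \<Rightarrow> 'k::field poly \<Rightarrow> 'k poly" where
  "hasse b f = (\<Sum>i\<in>{b..degree f}. monom (of_nat (i choose b) * coeff f i) (i - b))"

text \<open>The terms (nu f - nu(hasse_b f), b) representing the fractions
  (nu f - nu(hasse_b f))/b whose maximum is epsilon(f); terms with
  hasse_b f = 0 have value -infinity and are omitted.\<close>
definition eps_terms :: "('k::field poly \<Rightarrow> 'g::linordered_ab_group_add) \<Rightarrow> 'k poly \<Rightarrow> ('g \<times> nat) set" where
  "eps_terms \<nu> f = {(\<nu> f - \<nu> (hasse b f), b) | b. 1 \<le> b \<and> b \<le> degree f \<and> hasse b f \<noteq> 0}"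

text \<open>epsilon(f) >= epsilon(Q), with epsilon(constant) = -infinity; the comparison
  of the fractions gamma/b >= gamma'/b' is done as b' gamma >= b gamma'
  (i.e. in the divisible hull of the value group).\<close>
definition eps_ge :: "('k::field poly \<Rightarrow> 'g::linordered_ab_group_add) \<Rightarrow> 'k poly \<Rightarrow> 'k poly \<Rightarrow> bool" where
  "eps_ge \<nu> f Q \<longleftrightarrow> degree Q = 0 \<or>
     (0 < degree f \<and> (\<exists>(\<gamma>, b) \<in> eps_terms \<nu> f. \<forall>(\<gamma>', b') \<in> eps_terms \<nu> Q.
         nsmul b \<gamma>' \<le> nsmul b' \<gamma>))"

definition subfield :: "'k::field set \<Rightarrow> bool" where
  "subfield K \<longleftrightarrow> 0 \<in> K \<and> 1 \<in> K \<and> (\<forall>x\<in>K. \<forall>y\<in>K. x + y \<in> K \<and> x * y \<in> K \<and> - x \<in> K) \<and>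
     (\<forall>x\<in>K. inverse x \<in> K)"

definition polys_over :: "'k::field set \<Rightarrow> 'k poly set" where
  "polys_over K = {p. \<forall>i. coeff p i \<in> K}"

text \<open>the ambient field (of type 'k, algebraically closed) is algebraic over K,
  hence it is the algebraic closure of K\<close>
definition algebraic_over :: "'k::field set \<Rightarrow> bool" where
  "algebraic_over K \<longleftrightarrow> (\<forall>z. \<exists>p \<in> polys_over K. p \<noteq> 0 \<and> poly p z = 0)"

definition key_polynomial :: "('k::field poly \<Rightarrow> 'g::linordered_ab_group_add) \<Rightarrow> 'k set \<Rightarrow> 'k poly \<Rightarrow> bool" where
  "key_polynomial \<nu> K Q \<longleftrightarrow> Q \<in> polys_over K \<and> lead_coeff Q = 1 \<and>
     (\<forall>f \<in> polys_over K. f \<noteq> 0 \<longrightarrow> eps_ge \<nu> f Q \<longrightarrow> degree Q \<le> degree f)"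

end

theory Submission
  imports Defs
begin



context
  fixes \<mu> :: "'k::field poly \<Rightarrow> 'g::linordered_ab_group_add"
  assumes val: "krull_valuation \<mu>"
begin

lemma vmult: "f \<noteq> 0 \<Longrightarrow> g \<noteq> 0 \<Longrightarrow> \<mu> (f * g) = \<mu> f + \<mu> g"
  using val by (simp add: krull_valuation_def)

lemma vultra: "f \<noteq> 0 \<Longrightarrow> g \<noteq> 0 \<Longrightarrow> f + g \<noteq> 0 \<Longrightarrow> min (\<mu> f) (\<mu> g) \<le> \<mu> (f + g)"
  using val by (simp add: krull_valuation_def)

lemma v1: "\<mu> 1 = 0"
  using vmult[of 1 1] by simp

lemma vneg1: "\<mu> (-1) = 0"
proof -
  have h: "\<mu> (-1) + \<mu> (-1) = 0" using vmult[of "-1" "-1"] v1 by simp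
  show ?thesis
  proof (rule ccontr)
    assume "\<mu> (-1) \<noteq> 0"
    then consider "\<mu> (-1) < 0" | "\<mu> (-1) > 0" by (meson linorder_neqE)
    then show False using h by cases (metis add_neg_neg less_irrefl, metis add_pos_pos less_irrefl)
  qed
qed

lemma vneg: "\<mu> (- f) = \<mu> f"
proof (cases "f = 0")
  case True then show ?thesis by simp
next
  case False
  have "\<mu> ((-1) * f) = \<mu> (-1) + \<mu> f" by (rule vmult) (use False in auto)
  then show ?thesis using vneg1 by simp
qed

lemma vstrict: assumes "f \<noteq> 0" "g \<noteq> 0" "\<mu> f < \<mu> g" shows "\<mu> (f + g) = \<mu> f"
proof -
  have fg: "f + g \<noteq> 0"
  proof
    assume "f + g = 0" then have "g = - f" by (metis minus_unique)
    then show False using assms vneg by auto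
  qed
  have 1: "min (\<mu> f) (\<mu> g) \<le> \<mu> (f + g)" by (rule vultra) (use assms fg in auto)
  have "min (\<mu> (f+g)) (\<mu> (-g)) \<le> \<mu> ((f + g) + (-g))" by (rule vultra) (use assms fg in auto)
  then have 2: "min (\<mu> (f+g)) (\<mu> g) \<le> \<mu> f" using vneg by simp
  show ?thesis using 1 2 assms(3) by (auto simp: min_def split: if_splits)
qed

lemma vlow: assumes "f + g \<noteq> 0" "f \<noteq> 0 \<Longrightarrow> B \<le> \<mu> f" "g \<noteq> 0 \<Longrightarrow> B \<le> \<mu> g"
  shows "B \<le> \<mu> (f + g)"
proof (cases "f = 0")
  case True then show ?thesis using assms by auto
next
  case False
  show ?thesis
  proof (cases "g = 0")
    case True then show ?thesis using assms by auto
  next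
    case g: False
    have "min (\<mu> f) (\<mu> g) \<le> \<mu> (f + g)" by (rule vultra) (use assms False g in auto)
    then show ?thesis using assms False g by (auto simp: min_def split: if_splits)
  qed
qed

lemma cmult: "c \<noteq> 0 \<Longrightarrow> e \<noteq> 0 \<Longrightarrow> \<mu> [:c * e:] = \<mu> [:c:] + \<mu> [:e:]"
  using vmult[of "[:c:]" "[:e:]"] by (simp add: mult.commute)

end



definition V :: "('k::field poly \<Rightarrow> 'g::linordered_ab_group_add) \<Rightarrow> 'g \<Rightarrow> 'k poly \<Rightarrow> nat \<Rightarrow> 'g" where
  "V \<mu> l p i = \<mu> [:coeff p i:] + nsmul i l"

definition W :: "('k::field poly \<Rightarrow> 'g::linordered_ab_group_add) \<Rightarrow> 'g \<Rightarrow> 'k poly \<Rightarrow> 'g" where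
  "W \<mu> l p = Min {V \<mu> l p i | i. coeff p i \<noteq> 0}"

lemma gid: "(a::'g::ab_group_add) - b = l + (a - (b + l))" by (simp add: algebra_simps)

lemma nsmul_0[simp]: "nsmul 0 g = 0" by (simp add: nsmul_def)
lemma nsmul_Suc[simp]: "nsmul (Suc i) g = nsmul i g + g" by (simp add: nsmul_def add.commute)

lemma W_fin: "finite {V \<mu> l p i | i. coeff p i \<noteq> 0}"
proof -
  have "{V \<mu> l p i | i. coeff p i \<noteq> 0} \<subseteq> (V \<mu> l p) ` {..degree p}"
    using le_degree by fastforce
  then show ?thesis using finite_subset by blast
qed

lemma W_le: "coeff p i \<noteq> 0 \<Longrightarrow> W \<mu> l p \<le> V \<mu> l p i"
  unfolding W_def by (rule Min_le[OF W_fin]) blast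

lemma W_att: assumes "p \<noteq> 0" shows "\<exists>i. coeff p i \<noteq> 0 \<and> W \<mu> l p = V \<mu> l p i"
proof -
  have ne: "{V \<mu> l p i | i. coeff p i \<noteq> 0} \<noteq> {}" using assms leading_coeff_neq_0 by blast
  have "W \<mu> l p \<in> {V \<mu> l p i | i. coeff p i \<noteq> 0}"
    unfolding W_def by (rule Min_in[OF W_fin ne])
  then show ?thesis by auto
qed

lemma W_eqI: assumes "\<And>i. coeff p i \<noteq> 0 \<Longrightarrow> m \<le> V \<mu> l p i" "coeff p j \<noteq> 0" "V \<mu> l p j = m"
  shows "W \<mu> l p = m"
proof -
  have "p \<noteq> 0" using assms(2) by auto
  then obtain i where i: "coeff p i \<noteq> 0" "W \<mu> l p = V \<mu> l p i" using W_att by blast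
  have "W \<mu> l p \<le> m" using W_le[OF assms(2), of \<mu> l] assms(3) by simp
  moreover have "m \<le> W \<mu> l p" using assms(1)[OF i(1)] i(2) by simp
  ultimately show ?thesis by simp
qed

lemma trunc_W: "trunc_val \<mu> a g = W \<mu> (\<mu> [:-a, 1:]) (pcompose g [:a, 1:])"
proof -
  have d: "degree (pcompose g [:a, 1:]) = degree g" by (simp add: degree_pcompose)
  show ?thesis unfolding trunc_val_def W_def V_def
    by (rule arg_cong[where f=Min]) (use d le_degree in fastforce)
qed

context
  fixes \<mu> :: "'k::field poly \<Rightarrow> 'g::linordered_ab_group_add"
  assumes val: "krull_valuation \<mu>"
begin

lemma cstrict: "x \<noteq> 0 \<Longrightarrow> y \<noteq> 0 \<Longrightarrow> \<mu> [:x:] < \<mu> [:y:] \<Longrightarrow> \<mu> [:x + y:] = \<mu> [:x:]"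
  using vstrict[OF val, of "[:x:]" "[:y:]"] by simp

lemma clow: "x + y \<noteq> 0 \<Longrightarrow> (x \<noteq> 0 \<Longrightarrow> B \<le> \<mu> [:x:]) \<Longrightarrow> (y \<noteq> 0 \<Longrightarrow> B \<le> \<mu> [:y:]) \<Longrightarrow> B \<le> \<mu> [:x + y:]"
  using vlow[OF val, of "[:x:]" "[:y:]" B] by simp

lemma cm: "c \<noteq> 0 \<Longrightarrow> e \<noteq> 0 \<Longrightarrow> \<mu> [:c * e:] = \<mu> [:c:] + \<mu> [:e:]"
  by (rule cmult[OF val])

lemma W_lin:
  assumes p: "p \<noteq> 0"
  shows "W \<mu> l ([:d, 1:] * p) = W \<mu> l p + (if d = 0 then l else min (\<mu> [:d:]) l)"
proof -
  define q where "q = [:d, 1:] * p"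
  define w where "w = W \<mu> l p"
  define m where "m = (if d = 0 then l else min (\<mu> [:d:]) l)"
  have cq0: "coeff q 0 = d * coeff p 0" by (simp add: q_def)
  have cqS: "coeff q (Suc j) = d * coeff p (Suc j) + coeff p j" for j
    by (simp add: q_def)
  have wle: "coeff p i \<noteq> 0 \<Longrightarrow> w - nsmul i l \<le> \<mu> [:coeff p i:]" for i
    using W_le[of p i \<mu> l] by (simp add: w_def V_def diff_le_eq)
  have ml: "m \<le> l" by (simp add: m_def)
  have md: "d \<noteq> 0 \<Longrightarrow> m \<le> \<mu> [:d:]" by (simp add: m_def)
  have low: "w + m \<le> V \<mu> l q i" if nz: "coeff q i \<noteq> 0" for i
  proof (cases i)
    case 0
    then have d: "d \<noteq> 0" and c: "coeff p 0 \<noteq> 0" using nz cq0 by auto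
    have "w \<le> \<mu> [:coeff p 0:]" using wle[OF c] by simp
    then have "m + w \<le> \<mu> [:d:] + \<mu> [:coeff p 0:]" using md[OF d] by (rule add_mono[rotated])
    then show ?thesis using 0 cq0 cm[OF d c] by (simp add: V_def add.commute)
  next
    case (Suc j)
    have "w + m - nsmul i l \<le> \<mu> [:d * coeff p (Suc j) + coeff p j:]"
    proof (rule clow)
      show "d * coeff p (Suc j) + coeff p j \<noteq> 0" using nz Suc cqS by simp
    next
      assume h: "d * coeff p (Suc j) \<noteq> 0"
      then have d: "d \<noteq> 0" and c: "coeff p (Suc j) \<noteq> 0" by auto
      have "m + (w - nsmul (Suc j) l) \<le> \<mu> [:d:] + \<mu> [:coeff p (Suc j):]"
        by (rule add_mono[OF md[OF d] wle[OF c]])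
      then show "w + m - nsmul i l \<le> \<mu> [:d * coeff p (Suc j):]"
        using cm[OF d c] Suc by (simp add: algebra_simps)
    next
      assume c: "coeff p j \<noteq> 0"
      have "m + (w - nsmul j l) \<le> l + \<mu> [:coeff p j:]"
        by (rule add_mono[OF ml wle[OF c]])
      then show "w + m - nsmul i l \<le> \<mu> [:coeff p j:]"
        using Suc by (simp add: algebra_simps)
    qed
    then show ?thesis using Suc cqS by (simp add: V_def diff_le_eq)
  qed
  have att: "\<exists>j. coeff q j \<noteq> 0 \<and> V \<mu> l q j = w + m"
  proof (cases "d = 0")
    case True
    obtain j where j: "coeff p j \<noteq> 0" "w = V \<mu> l p j" using W_att[OF p] w_def by blast
    have cS: "coeff q (Suc j) = coeff p j" using cqS True by simp
    have "V \<mu> l q (Suc j) = V \<mu> l p j + l" using cS by (simp add: V_def add.assoc)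
    then have "V \<mu> l q (Suc j) = w + m" using j(2) True by (simp add: m_def)
    then show ?thesis using j(1) cS by (intro exI[of _ "Suc j"]) simp
  next
    case dnz: False
    show ?thesis
    proof (cases "\<mu> [:d:] \<le> l")
      case True
      then have mm: "m = \<mu> [:d:]" using dnz by (simp add: m_def)
      define P where "P = (\<lambda>j. coeff p j \<noteq> 0 \<and> V \<mu> l p j = w)"
      obtain i0 where i0: "coeff p i0 \<noteq> 0" "W \<mu> l p = V \<mu> l p i0" using W_att[OF p, of \<mu> l] by blast
      have "P i0" using i0 by (simp add: P_def w_def)
      then have ex: "\<exists>j. P j" by blast
      define j where "j = (LEAST j. P j)"
      have Pj: "P j" using LeastI_ex[OF ex] j_def by simp
      have notP: "k < j \<Longrightarrow> \<not> P k" for k using not_less_Least j_def by blast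
      have cj: "coeff p j \<noteq> 0" and vj: "\<mu> [:coeff p j:] = w - nsmul j l"
        using Pj by (auto simp: P_def V_def eq_diff_eq)
      have val1: "\<mu> [:d * coeff p j:] = m + w - nsmul j l"
        using cm[OF dnz cj] vj mm by (simp add: algebra_simps)
      show ?thesis
      proof (cases j)
        case 0
        show ?thesis using 0 cq0 cj dnz val1
          by (intro exI[of _ 0]) (simp add: V_def add.commute)
      next
        case (Suc k)
        have e: "\<mu> [:d * coeff p j + coeff p k:] = \<mu> [:d * coeff p j:]"
        proof (cases "coeff p k = 0")
          case True then show ?thesis by simp
        next
          case ck: False
          have "V \<mu> l p k \<noteq> w" using notP[of k] Suc ck by (simp add: P_def)
          moreover have "w \<le> V \<mu> l p k" using W_le[OF ck] w_def by simp
          ultimately have "w < V \<mu> l p k" by simp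
          then have lt: "w - nsmul k l < \<mu> [:coeff p k:]" by (simp add: V_def diff_less_eq)
          have "m + w - nsmul j l \<le> w - nsmul k l"
            using ml Suc by (simp add: algebra_simps)
          note hle = this
          have "\<mu> [:d * coeff p j:] < \<mu> [:coeff p k:]" using le_less_trans[OF hle lt] val1 by simp
          then show ?thesis using cstrict cj dnz ck by simp
        qed
          have nz: "d * coeff p j + coeff p k \<noteq> 0"
        proof
          assume z: "d * coeff p j + coeff p k = 0"
          then have ck: "coeff p k \<noteq> 0" using cj dnz by auto
          have "V \<mu> l p k \<noteq> w" using notP[of k] Suc ck by (simp add: P_def)
          moreover have "w \<le> V \<mu> l p k" using W_le[OF ck] w_def by simp
          ultimately have "w < V \<mu> l p k" by simp
          then have lt: "w - nsmul k l < \<mu> [:coeff p k:]" by (simp add: V_def diff_less_eq)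
          have "m + w - nsmul j l \<le> w - nsmul k l"
            using ml Suc by (simp add: algebra_simps)
          note hle = this
          have "\<mu> [:d * coeff p j:] < \<mu> [:coeff p k:]" using le_less_trans[OF hle lt] val1 by simp
          moreover have "coeff p k = - (d * coeff p j)" using minus_unique[OF z] by simp
          ultimately show False using vneg[OF val, of "[:d * coeff p j:]"] by simp
        qed
        have cqj: "coeff q j = d * coeff p j + coeff p k" using Suc cqS by simp
        have "V \<mu> l q j = \<mu> [:coeff q j:] + nsmul j l" by (simp add: V_def)
        also have "\<mu> [:coeff q j:] = m + w - nsmul j l" unfolding cqj e val1 ..
        finally have "V \<mu> l q j = w + m" by (simp add: add.commute)
        then show ?thesis using cqj nz by (intro exI[of _ j]) simp
      qed
    next
      case False
      then have lt: "l < \<mu> [:d:]" by simp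
      then have mm: "m = l" using dnz by (simp add: m_def)
      define S where "S = {j. coeff p j \<noteq> 0 \<and> V \<mu> l p j = w}"
      have Ssub: "S \<subseteq> {..degree p}" using le_degree by (auto simp: S_def)
      have fS: "finite S" using Ssub finite_subset by blast
      have neS: "S \<noteq> {}" using W_att[OF p, of \<mu> l] w_def S_def by force
      define j where "j = Max S"
      have jS: "j \<in> S" using Max_in[OF fS neS] j_def by simp
      have notS: "k > j \<Longrightarrow> k \<notin> S" for k using Max_ge[OF fS] j_def by fastforce
      have cj: "coeff p j \<noteq> 0" and vj: "\<mu> [:coeff p j:] = w - nsmul j l"
        using jS by (auto simp: S_def V_def eq_diff_eq)
      have key: "\<mu> [:coeff p j:] < \<mu> [:d * coeff p (Suc j):]" if c1: "coeff p (Suc j) \<noteq> 0"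
      proof -
        have "V \<mu> l p (Suc j) \<noteq> w" using notS[of "Suc j"] c1 by (simp add: S_def)
        moreover have "w \<le> V \<mu> l p (Suc j)" using W_le[OF c1] w_def by simp
        ultimately have "w < V \<mu> l p (Suc j)" by simp
        then have lt2: "w - nsmul (Suc j) l < \<mu> [:coeff p (Suc j):]" by (simp add: V_def diff_less_eq)
        have A: "l + (w - nsmul (Suc j) l) < \<mu> [:d:] + \<mu> [:coeff p (Suc j):]"
          by (rule add_strict_mono[OF lt lt2])
        have B: "\<mu> [:coeff p j:] = l + (w - nsmul (Suc j) l)" unfolding vj nsmul_Suc by (rule gid)
        show ?thesis unfolding B cm[OF dnz c1] by (rule A)
      qed
      have e: "\<mu> [:d * coeff p (Suc j) + coeff p j:] = \<mu> [:coeff p j:]"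
      proof (cases "coeff p (Suc j) = 0")
        case True then show ?thesis by simp
      next
        case False
        then show ?thesis using cstrict[of "coeff p j" "d * coeff p (Suc j)"] key cj dnz
          by (simp add: add.commute)
      qed
      have nz: "d * coeff p (Suc j) + coeff p j \<noteq> 0"
      proof
        assume z: "d * coeff p (Suc j) + coeff p j = 0"
        then have c1: "coeff p (Suc j) \<noteq> 0" using cj by auto
        have "d * coeff p (Suc j) = - coeff p j" using minus_unique[of "coeff p j" "d * coeff p (Suc j)"] z by (simp add: add.commute)
        then show False using key[OF c1] vneg[OF val, of "[:coeff p j:]"] by simp
      qed
      have "V \<mu> l q (Suc j) = \<mu> [:coeff q (Suc j):] + nsmul (Suc j) l" by (simp only: V_def)
      also have "\<mu> [:coeff q (Suc j):] = w - nsmul j l" unfolding cqS e vj ..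
      finally have "V \<mu> l q (Suc j) = w + m" unfolding mm nsmul_Suc by (simp add: algebra_simps)
      then show ?thesis using cqS nz by (intro exI[of _ "Suc j"]) simp
    qed
  qed
  have "W \<mu> l q = w + m"
    using W_eqI[of q "w + m" \<mu> l, OF low] att by blast
  then show ?thesis by (simp add: q_def w_def m_def)
qed

end



lemma neg_lt: "0 < a + b \<Longrightarrow> - b < (a::'g::linordered_ab_group_add)"
proof -
  assume h: "0 < a + b"
  have "- b + b < a + b" using h by simp
  then show ?thesis by (rule add_less_imp_less_right)
qed

lemma lt_neg: "- b < a \<Longrightarrow> 0 < a + (b::'g::linordered_ab_group_add)"
proof -
  assume "- b < a"
  then have "- b + b < a + b" by (rule add_strict_right_mono)
  then show ?thesis by simp
qed

lemma W_smult:
  fixes \<mu> :: "'k::field poly \<Rightarrow> 'g::linordered_ab_group_add"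
  assumes val: "krull_valuation \<mu>" and c: "c \<noteq> 0" and p: "p \<noteq> 0"
  shows "W \<mu> l (smult c p) = \<mu> [:c:] + W \<mu> l p"
proof -
  obtain j where j: "coeff p j \<noteq> 0" "W \<mu> l p = V \<mu> l p j" using W_att[OF p] by blast
  have Vs: "coeff p i \<noteq> 0 \<Longrightarrow> V \<mu> l (smult c p) i = \<mu> [:c:] + V \<mu> l p i" for i
    using cmult[OF val c, of "coeff p i"] by (simp add: V_def add.assoc)
  show ?thesis
  proof (rule W_eqI)
    fix i assume "coeff (smult c p) i \<noteq> 0"
    then have ci: "coeff p i \<noteq> 0" by simp
    show "\<mu> [:c:] + W \<mu> l p \<le> V \<mu> l (smult c p) i"
      unfolding Vs[OF ci] using W_le[OF ci] by (rule add_left_mono)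
  next
    show "coeff (smult c p) j \<noteq> 0" using j c by simp
    show "V \<mu> l (smult c p) j = \<mu> [:c:] + W \<mu> l p" using Vs[OF j(1)] j(2) by simp
  qed
qed

definition Pn :: "('k::field poly \<Rightarrow> 'g::linordered_ab_group_add) \<Rightarrow> 'g \<Rightarrow> 'k poly \<Rightarrow> bool" where
  "Pn \<mu> l p \<longleftrightarrow> coeff p 0 = 1 \<and> (\<forall>i>0. coeff p i \<noteq> 0 \<longrightarrow> 0 < V \<mu> l p i)"

context
  fixes \<mu> :: "'k::field poly \<Rightarrow> 'g::linordered_ab_group_add"
  assumes val: "krull_valuation \<mu>"
begin

lemma c1: "\<mu> [:1:] = 0" using v1[OF val] by (simp add: one_pCons)

lemma cslow: assumes "x + y \<noteq> 0" "x \<noteq> 0 \<Longrightarrow> B < \<mu> [:x:]" "y \<noteq> 0 \<Longrightarrow> B < \<mu> [:y:]"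
  shows "B < \<mu> [:x + y:]"
proof (cases "x = 0")
  case True then show ?thesis using assms by auto
next
  case False
  show ?thesis
  proof (cases "y = 0")
    case True then show ?thesis using assms by auto
  next
    case y: False
    have "min (\<mu> [:x:]) (\<mu> [:y:]) \<le> \<mu> ([:x:] + [:y:])" by (rule vultra[OF val]) (use assms False y in auto)
    then show ?thesis using assms False y by (auto simp: min_def split: if_splits)
  qed
qed

lemma Pn_nn: "Pn \<mu> l p \<Longrightarrow> coeff p i \<noteq> 0 \<Longrightarrow> 0 \<le> V \<mu> l p i"
  by (cases i) (auto simp: Pn_def V_def c1 intro: less_imp_le)

lemma Pn_mult: assumes P: "Pn \<mu> l p" and e: "e \<noteq> 0" and pos: "0 < \<mu> [:e:] + l"
  shows "Pn \<mu> l ([:1, e:] * p)"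
  unfolding Pn_def
proof (intro conjI allI impI)
  show "coeff ([:1, e:] * p) 0 = 1" using P by (simp add: Pn_def)
next
  fix i :: nat assume i: "0 < i" and nz: "coeff ([:1, e:] * p) i \<noteq> 0"
  then obtain j where ij: "i = Suc j" using gr0_implies_Suc by blast
  have cf: "coeff ([:1, e:] * p) (Suc j) = coeff p (Suc j) + e * coeff p j" by simp
  have X: "- nsmul (Suc j) l < \<mu> [:coeff p (Suc j) + e * coeff p j:]"
  proof (rule cslow)
    show "coeff p (Suc j) + e * coeff p j \<noteq> 0" using nz ij cf by simp
  next
    assume c: "coeff p (Suc j) \<noteq> 0"
    then have "0 < V \<mu> l p (Suc j)" using P by (simp add: Pn_def)
    then show "- nsmul (Suc j) l < \<mu> [:coeff p (Suc j):]" unfolding V_def by (rule neg_lt)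
  next
    assume h: "e * coeff p j \<noteq> 0"
    then have c: "coeff p j \<noteq> 0" by simp
    have "0 < (\<mu> [:e:] + l) + V \<mu> l p j" by (rule add_pos_nonneg[OF pos Pn_nn[OF P c]])
    moreover have "(\<mu> [:e:] + l) + V \<mu> l p j = (\<mu> [:e:] + \<mu> [:coeff p j:]) + nsmul (Suc j) l"
      by (simp add: V_def algebra_simps)
    ultimately have "0 < \<mu> [:e * coeff p j:] + nsmul (Suc j) l" using cmult[OF val e c] by simp
    then show "- nsmul (Suc j) l < \<mu> [:e * coeff p j:]" by (rule neg_lt)
  qed
  have "0 < \<mu> [:coeff ([:1, e:] * p) i:] + nsmul i l" unfolding ij cf by (rule lt_neg[OF X])
  then show "0 < V \<mu> l ([:1, e:] * p) i" by (simp only: V_def)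
qed

lemma Pn_W0: assumes "Pn \<mu> l p" shows "W \<mu> l p = 0"
proof (rule W_eqI)
  show "coeff p 0 \<noteq> 0" using assms by (simp add: Pn_def)
  show "V \<mu> l p 0 = 0" using assms by (simp add: Pn_def V_def c1)
  fix i assume "coeff p i \<noteq> 0" then show "0 \<le> V \<mu> l p i" by (rule Pn_nn[OF assms])
qed

lemma Pn_W1: assumes "Pn \<mu> l p" "0 < degree p" shows "0 < W \<mu> l (p - 1)"
proof -
  have "p - 1 \<noteq> 0" using assms(2) by auto
  then obtain j where j: "coeff (p - 1) j \<noteq> 0" "W \<mu> l (p - 1) = V \<mu> l (p - 1) j" using W_att by blast
  have j0: "j \<noteq> 0"
  proof
    assume "j = 0" then show False using j(1) assms(1) by (simp add: Pn_def)
  qed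
  then have "coeff (p - 1) j = coeff p j" by (simp add: coeff_diff)
  then show ?thesis using j j0 assms(1) by (simp add: Pn_def V_def)
qed

end



lemma pc_lin: "pcompose [:-r, 1:] [:a, 1:] = [:a - r, 1::'k::field:]"
  by (simp add: pcompose_pCons)

lemma pc_lin_n: "(a::'k::field) \<noteq> r \<Longrightarrow> pcompose (smult (inverse (a - r)) [:-r, 1:]) [:a, 1:] = [:1, inverse (a - r):]"
  by (simp only: pcompose_smult pc_lin) simp

lemma lin_split: "(x::'k::field) \<noteq> 0 \<Longrightarrow> y \<noteq> 0 \<Longrightarrow>
   smult (inverse (x * y)) (u * v) = smult (inverse x) u * smult (inverse y) v"
  by (simp add: inverse_mult_distrib mult_smult_left mult_smult_right smult_smult mult.commute)

context
  fixes \<mu> :: "'k::alg_closed_field poly \<Rightarrow> 'g::linordered_ab_group_add"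
  assumes val: "krull_valuation \<mu>"
begin

lemma root_split:
  fixes g :: "'k poly"
  assumes "poly g r = 0" "g \<noteq> 0"
  obtains g' where "g = [:-r, 1:] * g'" "g' \<noteq> 0" "degree g = Suc (degree g')"
    "\<And>s. poly g' s = 0 \<Longrightarrow> poly g s = 0"
proof -
  have "[:-r, 1:] dvd g" using assms(1) poly_eq_0_iff_dvd by blast
  then obtain g' where g: "g = [:-r, 1:] * g'" by (elim dvdE)
  have "g' \<noteq> 0" using g assms(2) by auto
  moreover from this have "degree g = Suc (degree g')" unfolding g by (subst degree_mult_eq) auto
  moreover have "\<And>s. poly g' s = 0 \<Longrightarrow> poly g s = 0" using g by simp
  ultimately show ?thesis using that g by blast
qed

lemma G:
  "g \<noteq> 0 \<Longrightarrow> (\<forall>r. poly g r = 0 \<longrightarrow> \<mu> [:-r, 1:] < \<mu> [:-a, 1:]) \<Longrightarrow>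
    poly g a \<noteq> 0 \<and> \<mu> g = \<mu> [:poly g a:] \<and>
    Pn \<mu> (\<mu> [:-a, 1:]) (pcompose (smult (inverse (poly g a)) g) [:a, 1:])"
proof (induction "degree g" arbitrary: g rule: less_induct)
  case (less g)
  define l where "l = \<mu> [:-a, 1:]"
  show ?case
  proof (cases "degree g = 0")
    case True
    then obtain c where g: "g = [:c:]" by (elim degree_eq_zeroE)
    then have c: "c \<noteq> 0" using less.prems by simp
    have "smult (inverse c) [:c:] = 1" using c by (simp add: one_pCons)
    moreover have "Pn \<mu> l [:1:]" by (auto simp: Pn_def coeff_pCons split: nat.splits)
    ultimately show ?thesis using g c by (simp add: l_def)
  next
    case False
    then obtain r where r: "poly g r = 0" using alg_closed_imp_poly_has_root by blast
    obtain g' where g: "g = [:-r, 1:] * g'" and g'0: "g' \<noteq> 0" and dg: "degree g = Suc (degree g')"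
      and rt: "\<And>s. poly g' s = 0 \<Longrightarrow> poly g s = 0"
      using root_split[OF r less.prems(1)] by blast
    have IH: "poly g' a \<noteq> 0 \<and> \<mu> g' = \<mu> [:poly g' a:] \<and>
       Pn \<mu> l (pcompose (smult (inverse (poly g' a)) g') [:a, 1:])"
      using less.hyps[of g'] dg g'0 rt less.prems(2) by (auto simp: l_def)
    have lt: "\<mu> [:-r, 1:] < l" using less.prems(2) r by (simp add: l_def)
    have ar: "a \<noteq> r" using lt l_def by auto
    have ma: "\<mu> (- [:-a, 1:]) = l" unfolding l_def by (rule vneg[OF val])
    have "\<mu> ([:-r, 1:] + - [:-a, 1:]) = \<mu> [:-r, 1:]"
      by (rule vstrict[OF val]) (use lt ma in auto)
    moreover have "[:-r, 1:] + - [:-a, 1:] = [:a - r:]" by simp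
    ultimately have mar: "\<mu> [:a - r:] = \<mu> [:-r, 1:]" by simp
    have ga: "poly g a = (a - r) * poly g' a" unfolding g poly_mult by (simp add: algebra_simps)
    have gan: "poly g a \<noteq> 0" using ga ar IH by simp
    have "\<mu> g = \<mu> [:-r, 1:] + \<mu> g'" unfolding g by (rule vmult[OF val]) (use g'0 in auto)
    also have "\<dots> = \<mu> [:a - r:] + \<mu> [:poly g' a:]" using mar IH by simp
    also have "\<dots> = \<mu> [:poly g a:]" using cmult[OF val, of "a - r" "poly g' a"] ar IH ga by simp
    finally have mg: "\<mu> g = \<mu> [:poly g a:]" .
    define e where "e = inverse (a - r)"
    have e0: "e \<noteq> 0" using ar by (simp add: e_def)
    have "\<mu> [:e * (a - r):] = \<mu> [:e:] + \<mu> [:a - r:]" by (rule cmult[OF val e0]) (use ar in simp)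
    moreover have "e * (a - r) = 1" using ar by (simp add: e_def)
    ultimately have "\<mu> [:e:] + \<mu> [:a - r:] = 0" using c1[OF val] by simp
    moreover have "\<mu> [:e:] + \<mu> [:a - r:] < \<mu> [:e:] + l" using lt mar by simp
    ultimately have pos: "0 < \<mu> [:e:] + l" by simp
    have "smult (inverse (poly g a)) g = smult (inverse (a - r)) [:-r, 1:] * smult (inverse (poly g' a)) g'"
      unfolding ga by (subst g, rule lin_split) (use ar IH in auto)
    then have "pcompose (smult (inverse (poly g a)) g) [:a, 1:] =
        [:1, e:] * pcompose (smult (inverse (poly g' a)) g') [:a, 1:]"
      by (simp only: pcompose_mult pc_lin_n[OF ar] e_def)
    moreover have "Pn \<mu> l ([:1, e:] * pcompose (smult (inverse (poly g' a)) g') [:a, 1:])"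
      by (rule Pn_mult[OF val _ e0 pos]) (use IH in simp)
    ultimately show ?thesis using gan mg by (simp add: l_def)
  qed
qed

lemma H:
  "Q \<noteq> 0 \<Longrightarrow> (\<forall>r. poly Q r = 0 \<longrightarrow> \<mu> [:-r, 1:] \<le> \<mu> [:-b, 1:]) \<Longrightarrow>
    W \<mu> (\<mu> [:-b, 1:]) (pcompose Q [:b, 1:]) = \<mu> Q"
proof (induction "degree Q" arbitrary: Q rule: less_induct)
  case (less Q)
  define l where "l = \<mu> [:-b, 1:]"
  show ?case
  proof (cases "degree Q = 0")
    case True
    then obtain c where g: "Q = [:c:]" by (elim degree_eq_zeroE)
    then have c: "c \<noteq> 0" using less.prems by simp
    have "W \<mu> l [:c:] = \<mu> [:c:]"
    proof (rule W_eqI)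
      fix i assume "coeff [:c:] i \<noteq> 0"
      then have "i = 0" by (cases i) auto
      then show "\<mu> [:c:] \<le> V \<mu> l [:c:] i" by (simp add: V_def)
    next
      show "coeff [:c:] 0 \<noteq> 0" using c by simp
      show "V \<mu> l [:c:] 0 = \<mu> [:c:]" by (simp add: V_def)
    qed
    then show ?thesis using g by (simp add: l_def)
  next
    case False
    then obtain r where r: "poly Q r = 0" using alg_closed_imp_poly_has_root by blast
    obtain g' where g: "Q = [:-r, 1:] * g'" and g'0: "g' \<noteq> 0" and dg: "degree Q = Suc (degree g')"
      and rt: "\<And>s. poly g' s = 0 \<Longrightarrow> poly Q s = 0"
      using root_split[OF r less.prems(1)] by blast
    have IH: "W \<mu> l (pcompose g' [:b, 1:]) = \<mu> g'"
      using less.hyps[of g'] dg g'0 rt less.prems(2) by (auto simp: l_def)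
    have le: "\<mu> [:-r, 1:] \<le> l" using less.prems(2) r by (simp add: l_def)
    have p0: "pcompose g' [:b, 1:] \<noteq> 0" using g'0 pcompose_eq_0[of g' "[:b, 1:]"] by auto
    have Wq: "W \<mu> l (pcompose Q [:b, 1:]) = \<mu> g' + (if b - r = 0 then l else min (\<mu> [:b - r:]) l)"
      unfolding g pcompose_mult pc_lin W_lin[OF val p0] IH ..
    have mr: "\<mu> [:-r, 1:] = (if b - r = 0 then l else min (\<mu> [:b - r:]) l)"
    proof (cases "b = r")
      case True then show ?thesis by (simp add: l_def)
    next
      case ne: False
      have eq: "[:-r, 1:] + - [:-b, 1:] = [:b - r:]" by simp
      have mb: "\<mu> (- [:-b, 1:]) = l" unfolding l_def by (rule vneg[OF val])
      show ?thesis
      proof (cases "\<mu> [:-r, 1:] < l")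
        case True
        have "\<mu> ([:-r, 1:] + - [:-b, 1:]) = \<mu> [:-r, 1:]"
          by (rule vstrict[OF val]) (use True mb in auto)
        then show ?thesis using eq ne True by (auto simp: min_def)
      next
        case False
        then have el: "\<mu> [:-r, 1:] = l" using le by simp
        have "min (\<mu> [:-r, 1:]) (\<mu> (- [:-b, 1:])) \<le> \<mu> ([:-r, 1:] + - [:-b, 1:])"
          by (rule vultra[OF val]) (use eq ne in auto)
        then have "l \<le> \<mu> [:b - r:]" using el eq mb by simp
        then show ?thesis using el ne by (simp add: min_def)
      qed
    qed
    have "\<mu> Q = \<mu> [:-r, 1:] + \<mu> g'" unfolding g by (rule vmult[OF val]) (use g'0 in auto)
    then show ?thesis using Wq mr by (simp add: l_def add.commute)
  qed
qed

end

lemma delta_ge: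
  fixes \<mu> :: "'k::field poly \<Rightarrow> 'g::linorder"
  assumes "g \<noteq> 0" "poly g r = 0" shows "\<mu> [:-r, 1:] \<le> delta \<mu> g"
  unfolding delta_def using assms poly_roots_finite[OF assms(1)] by (intro Max_ge) auto

theorem lemma2p12:
  fixes \<mu> :: "'k::alg_closed_field poly \<Rightarrow> 'g::linordered_ab_group_add"
    and f :: "'k poly" and a :: 'k
  assumes val: "krull_valuation \<mu>"
    and f_nonconst: "0 < degree f"
    and opt: "optimizing_root \<mu> f a"
  shows "(\<forall>g :: 'k poly. 0 < degree g \<and> delta \<mu> g < delta \<mu> f \<longrightarrow>
            poly g a \<noteq> 0 \<and>
            trunc_val \<mu> a g = \<mu> g \<and> \<mu> g = \<mu> [:poly g a:] \<and>
            trunc_val \<mu> a (smult (inverse (poly g a)) g) = 0 \<and>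
            0 < trunc_val \<mu> a (smult (inverse (poly g a)) g - 1))
       \<and> (\<forall>(K :: 'k set) (Q :: 'k poly) (b :: 'k).
            subfield K \<and> algebraic_over K \<and> Q \<in> polys_over K \<and>
            key_polynomial \<mu> K Q \<and> 0 < degree Q \<and> optimizing_root \<mu> Q b \<longrightarrow>
            trunc_val \<mu> b Q = \<mu> Q)"
proof -
  have A: "\<forall>g :: 'k poly. 0 < degree g \<and> delta \<mu> g < delta \<mu> f \<longrightarrow>
            poly g a \<noteq> 0 \<and>
            trunc_val \<mu> a g = \<mu> g \<and> \<mu> g = \<mu> [:poly g a:] \<and>
            trunc_val \<mu> a (smult (inverse (poly g a)) g) = 0 \<and>
            0 < trunc_val \<mu> a (smult (inverse (poly g a)) g - 1)"
  proof (intro allI impI)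
  fix g :: "'k poly"
  assume h: "0 < degree g \<and> delta \<mu> g < delta \<mu> f"
  define l where "l = \<mu> [:-a, 1:]"
  have lf: "l = delta \<mu> f" using opt by (simp add: optimizing_root_def l_def)
  have g0: "g \<noteq> 0" using h by auto
  have roots: "\<forall>r. poly g r = 0 \<longrightarrow> \<mu> [:-r, 1:] < \<mu> [:-a, 1:]"
    using delta_ge[OF g0] h lf l_def by (metis le_less_trans)
  note GG = G[OF val g0 roots]
  define h0 where "h0 = smult (inverse (poly g a)) g"
  have Pn: "Pn \<mu> l (pcompose h0 [:a, 1:])" using GG by (simp add: h0_def l_def)
  have W0: "W \<mu> l (pcompose h0 [:a, 1:]) = 0" by (rule Pn_W0[OF val Pn])
  have gsplit: "g = smult (poly g a) h0" using GG by (simp add: h0_def)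
  have c0: "coeff (pcompose h0 [:a, 1:]) 0 = 1" using Pn unfolding Pn_def by blast
  have h00: "pcompose h0 [:a, 1:] \<noteq> 0" using c0 by (metis coeff_0 zero_neq_one)
  have tg: "trunc_val \<mu> a g = \<mu> [:poly g a:]"
    unfolding trunc_W l_def[symmetric]
    by (subst gsplit, subst pcompose_smult, subst W_smult[OF val _ h00]) (use GG W0 in auto)
  show "poly g a \<noteq> 0 \<and> trunc_val \<mu> a g = \<mu> g \<and> \<mu> g = \<mu> [:poly g a:] \<and>
            trunc_val \<mu> a (smult (inverse (poly g a)) g) = 0 \<and>
            0 < trunc_val \<mu> a (smult (inverse (poly g a)) g - 1)"
  proof -
    have t1: "trunc_val \<mu> a h0 = 0" unfolding trunc_W l_def[symmetric] by (rule W0)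
    have dh: "0 < degree (pcompose h0 [:a, 1:])" using h GG by (simp add: h0_def degree_pcompose)
    have "0 < W \<mu> l (pcompose h0 [:a, 1:] - 1)" by (rule Pn_W1[OF val Pn dh])
    then have t2: "0 < trunc_val \<mu> a (h0 - 1)"
      unfolding trunc_W l_def[symmetric] by (simp add: pcompose_diff pcompose_1)
    show ?thesis using tg t1 t2 GG by (simp add: h0_def)
  qed
qed
  have B: "\<forall>(K :: 'k set) (Q :: 'k poly) (b :: 'k).
            subfield K \<and> algebraic_over K \<and> Q \<in> polys_over K \<and>
            key_polynomial \<mu> K Q \<and> 0 < degree Q \<and> optimizing_root \<mu> Q b \<longrightarrow>
            trunc_val \<mu> b Q = \<mu> Q"
  proof (intro allI impI)
  fix K :: "'k set" and Q :: "'k poly" and b :: 'k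
  assume h: "subfield K \<and> algebraic_over K \<and> Q \<in> polys_over K \<and>
            key_polynomial \<mu> K Q \<and> 0 < degree Q \<and> optimizing_root \<mu> Q b"
  have Q0: "Q \<noteq> 0" using h by auto
  have "\<forall>r. poly Q r = 0 \<longrightarrow> \<mu> [:-r, 1:] \<le> \<mu> [:-b, 1:]"
    using delta_ge[OF Q0, of _ \<mu>] h by (auto simp: optimizing_root_def)
  then show "trunc_val \<mu> b Q = \<mu> Q" unfolding trunc_W by (rule H[OF val Q0])
  qed
  show ?thesis using A B by blast
qed


end
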